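(* For every restriction category $\mathbb{X}$, the restriction category $\mathbf{R}[\mathbf{L}[\mathbb{X}]]$ is isomorphic, as a restriction category, to $\mathbb{X}$, and this isomorphism is natural in $\mathbb{X}$.
   Context: Composition is diagrammatic. A restriction category is a category with an assignment to each $f:A\to B$ of $\bar f:A\to A$ such that $\bar ff=f$; $\bar f\bar g=\bar g\bar f$ and $\bar g\bar f=\overline{\bar gf}$ for $f:A\to B$, $g:A\to C$; $f\bar g=\overline{fg}f$ for $f:A\to B$, $g:B\to C$. A restriction idempotent is $a$ with $a=\bar a$. An isomorphism of restriction categories is an isomorphism of categories preserving the restriction operation; naturality is with respect to restriction functors (functors with $F\bar f=\overline{Ff}$). $\mathbf{L}[\mathbb{X}]$: objects pairs $(A,a)$, $a$ a restriction idempotent on $A$; morphisms $f:(A,a)\to(B,b)$ are morphisms $f:A\to B$ of $\mathbb{X}$ with $\bar f=a$ and $fb=f$; identity $a$; composition as in $\mathbb{X}$; local structure $\mathsf{L}(A,a)=(A,\mathrm{id}_A)$ and $\eta_{(A,a)}=a$. For a restriction functor $F$, $\mathbf{L}[F](A,a)=(FA,Fa)$ and $\mathbf{L}[F]f=Ff$. For a local category $\mathbb{C}$ (a category with objects $\mathsf{L}M$ and monics $\eta_M:M\to\mathsf{L}M$ satisfying $\mathsf{L}\mathsf{L}M=\mathsf{L}M$, $\eta_{\mathsf{L}M}=\mathrm{id}$, and existence of pullbacks of $\eta_M$ along any $f:N\to\mathsf{L}M$ with leg $m:P\to N$, $\mathsf{L}P=\mathsf{L}N$, $m\eta_N=\eta_P$),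 $\mathbf{R}[\mathbb{C}]$ has objects the total objects ($M=\mathsf{L}M$, $\eta_M=\mathrm{id}$); morphisms $M\to N$ are isomorphism classes of pairs $(U,f)$ with $\mathsf{L}U=M$, $f:U\to N$ ($(U,f)\cong(V,g)$ via an iso $\varphi:U\to V$ with $\varphi\eta_V=\eta_U$, $\varphi g=f$); identity $(M,\mathrm{id}_M)$; $(U,f)(V,g)=(W,\pi_Vg)$ with $W,\pi_V$ a pullback of $\eta_V$ along $f$; restriction $\overline{(U,f)}=(U,\eta_U)$. For a local functor $F$, $\mathbf{R}[F](U,f)=(FU,Ff)$. *)

theory Defs
  imports Main
begin

section \<open>Categories (composition is diagrammatic: cComp C f g = "f then g")\<close>

record ('o,'a) cat =
  cObj  :: "'o set"
  cArr  :: "'a set"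
  cDom  :: "'a \<Rightarrow> 'o"
  cCod  :: "'a \<Rightarrow> 'o"
  cId   :: "'o \<Rightarrow> 'a"
  cComp :: "'a \<Rightarrow> 'a \<Rightarrow> 'a"

record ('o,'a) rcat = "('o,'a) cat" +
  cRst :: "'a \<Rightarrow> 'a"

record ('o,'a) lcat = "('o,'a) cat" +
  cL   :: "'o \<Rightarrow> 'o"
  cEta :: "'o \<Rightarrow> 'a"

definition hom :: "('o,'a,'m) cat_scheme \<Rightarrow> 'o \<Rightarrow> 'o \<Rightarrow> 'a set" where
  "hom C A B = {f \<in> cArr C. cDom C f = A \<and> cCod C f = B}"

definition is_cat :: "('o,'a,'m) cat_scheme \<Rightarrow> bool" where
  "is_cat C \<longleftrightarrow>
     (\<forall>f\<in>cArr C. cDom C f \<in> cObj C \<and> cCod C f \<in> cObj C) \<and>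
     (\<forall>A\<in>cObj C. cId C A \<in> hom C A A) \<and>
     (\<forall>f\<in>cArr C. \<forall>g\<in>cArr C. cCod C f = cDom C g \<longrightarrow>
         cComp C f g \<in> hom C (cDom C f) (cCod C g)) \<and>
     (\<forall>f\<in>cArr C. cComp C (cId C (cDom C f)) f = f \<and> cComp C f (cId C (cCod C f)) = f) \<and>
     (\<forall>f\<in>cArr C. \<forall>g\<in>cArr C. \<forall>h\<in>cArr C. cCod C f = cDom C g \<longrightarrow> cCod C g = cDom C h \<longrightarrow>
         cComp C (cComp C f g) h = cComp C f (cComp C g h))"

definition restriction_category :: "('o,'a,'m) rcat_scheme \<Rightarrow> bool" where
  "restriction_category X \<longleftrightarrow> is_cat X \<and>
     (\<forall>f\<in>cArr X. cRst X f \<in> hom X (cDom X f) (cDom X f)) \<and>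
     (\<forall>f\<in>cArr X. cComp X (cRst X f) f = f) \<and>
     (\<forall>f\<in>cArr X. \<forall>g\<in>cArr X. cDom X f = cDom X g \<longrightarrow>
         cComp X (cRst X f) (cRst X g) = cComp X (cRst X g) (cRst X f) \<and>
         cComp X (cRst X g) (cRst X f) = cRst X (cComp X (cRst X g) f)) \<and>
     (\<forall>f\<in>cArr X. \<forall>g\<in>cArr X. cCod X f = cDom X g \<longrightarrow>
         cComp X f (cRst X g) = cComp X (cRst X (cComp X f g)) f)"

definition restriction_idempotent :: "('o,'a,'m) rcat_scheme \<Rightarrow> 'o \<Rightarrow> 'a \<Rightarrow> bool" where
  "restriction_idempotent X A a \<longleftrightarrow> a \<in> hom X A A \<and> cRst X a = a"

definition is_functor ::
  "('o,'a,'m) cat_scheme \<Rightarrow> ('p,'b,'n) cat_scheme \<Rightarrow> ('o \<Rightarrow> 'p) \<Rightarrow> ('a \<Rightarrow> 'b) \<Rightarrow> bool" where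
  "is_functor C D Fo Fa \<longleftrightarrow>
     (\<forall>A\<in>cObj C. Fo A \<in> cObj D) \<and>
     (\<forall>f\<in>cArr C. Fa f \<in> hom D (Fo (cDom C f)) (Fo (cCod C f))) \<and>
     (\<forall>A\<in>cObj C. Fa (cId C A) = cId D (Fo A)) \<and>
     (\<forall>f\<in>cArr C. \<forall>g\<in>cArr C. cCod C f = cDom C g \<longrightarrow>
         Fa (cComp C f g) = cComp D (Fa f) (Fa g))"

definition rfunctor ::
  "('o,'a,'m) rcat_scheme \<Rightarrow> ('p,'b,'n) rcat_scheme \<Rightarrow> ('o \<Rightarrow> 'p) \<Rightarrow> ('a \<Rightarrow> 'b) \<Rightarrow> bool" where
  "rfunctor X Y Fo Fa \<longleftrightarrow> is_functor X Y Fo Fa \<and>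
     (\<forall>f\<in>cArr X. Fa (cRst X f) = cRst Y (Fa f))"

definition iso_rcat ::
  "('o,'a,'m) rcat_scheme \<Rightarrow> ('p,'b,'n) rcat_scheme \<Rightarrow> ('o \<Rightarrow> 'p) \<Rightarrow> ('a \<Rightarrow> 'b) \<Rightarrow> bool" where
  "iso_rcat X Y Fo Fa \<longleftrightarrow> rfunctor X Y Fo Fa \<and>
     (\<exists>Go Ga. is_functor Y X Go Ga \<and>
        (\<forall>A\<in>cObj X. Go (Fo A) = A) \<and> (\<forall>B\<in>cObj Y. Fo (Go B) = B) \<and>
        (\<forall>f\<in>cArr X. Ga (Fa f) = f) \<and> (\<forall>g\<in>cArr Y. Fa (Ga g) = g))"

definition monic :: "('o,'a,'m) cat_scheme \<Rightarrow> 'a \<Rightarrow> bool" where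
  "monic C m \<longleftrightarrow> m \<in> cArr C \<and>
     (\<forall>x\<in>cArr C. \<forall>y\<in>cArr C. cDom C x = cDom C y \<longrightarrow> cCod C x = cDom C m \<longrightarrow>
        cCod C y = cDom C m \<longrightarrow> cComp C x m = cComp C y m \<longrightarrow> x = y)"

definition is_iso :: "('o,'a,'m) cat_scheme \<Rightarrow> 'a \<Rightarrow> bool" where
  "is_iso C \<phi> \<longleftrightarrow> \<phi> \<in> cArr C \<and>
     (\<exists>\<psi>\<in>hom C (cCod C \<phi>) (cDom C \<phi>).
        cComp C \<phi> \<psi> = cId C (cDom C \<phi>) \<and> cComp C \<psi> \<phi> = cId C (cCod C \<phi>))"

definition is_pullback :: "('o,'a,'m) cat_scheme \<Rightarrow> 'a \<Rightarrow> 'a \<Rightarrow> 'a \<Rightarrow> 'a \<Rightarrow> bool" where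
  "is_pullback C m g f h \<longleftrightarrow>
     m \<in> cArr C \<and> g \<in> cArr C \<and> f \<in> cArr C \<and> h \<in> cArr C \<and>
     cDom C m = cDom C g \<and> cCod C m = cDom C f \<and> cCod C g = cDom C h \<and> cCod C f = cCod C h \<and>
     cComp C m f = cComp C g h \<and>
     (\<forall>x\<in>cArr C. \<forall>y\<in>cArr C. cDom C x = cDom C y \<longrightarrow> cCod C x = cDom C f \<longrightarrow>
        cCod C y = cDom C h \<longrightarrow> cComp C x f = cComp C y h \<longrightarrow>
        (\<exists>!u. u \<in> hom C (cDom C x) (cDom C m) \<and> cComp C u m = x \<and> cComp C u g = y))"

definition local_category :: "('o,'a,'m) lcat_scheme \<Rightarrow> bool" where
  "local_category C \<longleftrightarrow> is_cat C \<and>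
     (\<forall>M\<in>cObj C. cL C M \<in> cObj C \<and> cEta C M \<in> hom C M (cL C M) \<and> monic C (cEta C M) \<and>
        cL C (cL C M) = cL C M \<and> cEta C (cL C M) = cId C (cL C M)) \<and>
     (\<forall>M\<in>cObj C. \<forall>N\<in>cObj C. \<forall>f\<in>hom C N (cL C M).
        \<exists>m g. is_pullback C m g f (cEta C M) \<and> cL C (cDom C m) = cL C N \<and>
              cComp C m (cEta C N) = cEta C (cDom C m))"

definition total_obj :: "('o,'a,'m) lcat_scheme \<Rightarrow> 'o \<Rightarrow> bool" where
  "total_obj C M \<longleftrightarrow> M \<in> cObj C \<and> cL C M = M \<and> cEta C M = cId C M"

definition span_iso :: "('o,'a,'m) lcat_scheme \<Rightarrow> 'o \<times> 'a \<Rightarrow> 'o \<times> 'a \<Rightarrow> bool" where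
  "span_iso C q p \<longleftrightarrow>
     (\<exists>\<phi>. is_iso C \<phi> \<and> cDom C \<phi> = fst q \<and> cCod C \<phi> = fst p \<and>
          cComp C \<phi> (cEta C (fst p)) = cEta C (fst q) \<and> cComp C \<phi> (snd p) = snd q)"

definition rclass :: "('o,'a,'m) lcat_scheme \<Rightarrow> 'o \<times> 'a \<Rightarrow> ('o \<times> 'a) set" where
  "rclass C p = {q. fst q \<in> cObj C \<and> snd q \<in> hom C (fst q) (cCod C (snd p)) \<and> span_iso C q p}"

definition rrep :: "('o \<times> 'a) set \<Rightarrow> 'o \<times> 'a" where
  "rrep c = (SOME p. p \<in> c)"

text \<open>Composite (U,f)(V,g) = (W, \<pi>_V g), with W, \<pi>_V a pullback of \<eta>_V along f
  as provided by the local structure.\<close>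
definition rcomp :: "('o,'a,'m) lcat_scheme \<Rightarrow> ('o \<times> 'a) set \<Rightarrow> ('o \<times> 'a) set \<Rightarrow> ('o \<times> 'a) set" where
  "rcomp C c d =
     (let U = fst (rrep c); f = snd (rrep c); V = fst (rrep d); g = snd (rrep d);
          mp = (SOME mp. is_pullback C (fst mp) (snd mp) f (cEta C V) \<and>
                   cL C (cDom C (fst mp)) = cL C U \<and>
                   cComp C (fst mp) (cEta C U) = cEta C (cDom C (fst mp)))
      in rclass C (cDom C (fst mp), cComp C (snd mp) g))"

definition R :: "('o,'a,'m) lcat_scheme \<Rightarrow> ('o, ('o \<times> 'a) set) rcat" where
  "R C = \<lparr> cObj = {M. total_obj C M},
           cArr = {rclass C (U, f) | U f. U \<in> cObj C \<and> f \<in> cArr C \<and> cDom C f = U \<and>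
                                          total_obj C (cCod C f)},
           cDom = (\<lambda>c. cL C (fst (rrep c))),
           cCod = (\<lambda>c. cCod C (snd (rrep c))),
           cId = (\<lambda>M. rclass C (M, cId C M)),
           cComp = rcomp C,
           cRst = (\<lambda>c. rclass C (fst (rrep c), cEta C (fst (rrep c)))) \<rparr>"

definition R_arr :: "('p,'b,'n) lcat_scheme \<Rightarrow> ('o \<Rightarrow> 'p) \<Rightarrow> ('a \<Rightarrow> 'b) \<Rightarrow> ('o \<times> 'a) set \<Rightarrow> ('p \<times> 'b) set" where
  "R_arr D Fo Fa c = rclass D (Fo (fst (rrep c)), Fa (snd (rrep c)))"

text \<open>Objects are pairs (A,a) with a a restriction idempotent on A; a morphism
  f : (A,a) \<rightarrow> (B,b) is recorded as the triple ((A,a), f, (B,b)).\<close>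
definition L_objs :: "('o,'a,'m) rcat_scheme \<Rightarrow> ('o \<times> 'a) set" where
  "L_objs X = {(A, a). A \<in> cObj X \<and> restriction_idempotent X A a}"

definition L :: "('o,'a,'m) rcat_scheme \<Rightarrow> ('o \<times> 'a, ('o \<times> 'a) \<times> 'a \<times> ('o \<times> 'a)) lcat" where
  "L X = \<lparr> cObj = L_objs X,
           cArr = {(s, f, t). s \<in> L_objs X \<and> t \<in> L_objs X \<and> f \<in> hom X (fst s) (fst t) \<and>
                              cRst X f = snd s \<and> cComp X f (snd t) = f},
           cDom = (\<lambda>(s, f, t). s),
           cCod = (\<lambda>(s, f, t). t),
           cId = (\<lambda>(A, a). ((A, a), a, (A, a))),
           cComp = (\<lambda>(s, f, t) (s', g, t'). (s, cComp X f g, t')),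
           cL = (\<lambda>(A, a). (A, cId X A)),
           cEta = (\<lambda>(A, a). ((A, a), a, (A, cId X A))) \<rparr>"

definition L_obj :: "('o \<Rightarrow> 'p) \<Rightarrow> ('a \<Rightarrow> 'b) \<Rightarrow> 'o \<times> 'a \<Rightarrow> 'p \<times> 'b" where
  "L_obj Fo Fa = (\<lambda>(A, a). (Fo A, Fa a))"

definition L_arr :: "('o \<Rightarrow> 'p) \<Rightarrow> ('a \<Rightarrow> 'b) \<Rightarrow>
    ('o \<times> 'a) \<times> 'a \<times> ('o \<times> 'a) \<Rightarrow> ('p \<times> 'b) \<times> 'b \<times> ('p \<times> 'b)" where
  "L_arr Fo Fa = (\<lambda>(s, f, t). (L_obj Fo Fa s, Fa f, L_obj Fo Fa t))"

text \<open>On objects (A, id_A) \<mapsto> A; on arrows [(U, f)] \<mapsto> f.\<close>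
definition phi_obj :: "'o \<times> 'a \<Rightarrow> 'o" where
  "phi_obj M = fst M"

definition phi_arr :: "(('o \<times> 'a) \<times> ('o \<times> 'a) \<times> 'a \<times> ('o \<times> 'a)) set \<Rightarrow> 'a" where
  "phi_arr c = fst (snd (snd (rrep c)))"

end

theory Submission
  imports Defs
begin

definition ptL :: "('o,'a,'m) rcat_scheme \<Rightarrow> 'a \<Rightarrow> ('o \<times> 'a) \<times> ('o \<times> 'a) \<times> 'a \<times> ('o \<times> 'a)" where
  "ptL X f = ((cDom X f, cRst X f), ((cDom X f, cRst X f), f, (cCod X f, cId X (cCod X f))))"

definition embL :: "('o,'a,'m) rcat_scheme \<Rightarrow> 'a \<Rightarrow> (('o \<times> 'a) \<times> ('o \<times> 'a) \<times> 'a \<times> ('o \<times> 'a)) set" where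
  "embL X f = {ptL X f}"

lemma rrep_emb[simp]: "rrep (embL X f) = ptL X f"
  by (simp add: rrep_def embL_def)

lemma phi_emb[simp]: "phi_arr (embL X f) = f"
  by (simp add: phi_arr_def ptL_def)

lemma emb_inj: "embL X f = embL X g \<Longrightarrow> f = g"
  by (metis phi_emb)

lemma ball_img: "(\<forall>x\<in>f ` A. P x) = (\<forall>y\<in>A. P (f y))" by auto

locale rcat_loc =
  fixes X :: "('o,'a,'m) rcat_scheme"
  assumes RC: "restriction_category X"
begin

abbreviation "cmp \<equiv> cComp X"
abbreviation "rs \<equiv> cRst X"
abbreviation "ii \<equiv> cId X"
abbreviation "dm \<equiv> cDom X"
abbreviation "cd \<equiv> cCod X"
abbreviation "Ar \<equiv> cArr X"
abbreviation "Ob \<equiv> cObj X"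

lemma cat: "is_cat X" using RC restriction_category_def by blast

lemma arr_ob: "f \<in> Ar \<Longrightarrow> dm f \<in> Ob \<and> cd f \<in> Ob"
  using cat unfolding is_cat_def by blast

lemma id_hom: "A \<in> Ob \<Longrightarrow> ii A \<in> Ar \<and> dm (ii A) = A \<and> cd (ii A) = A"
  using cat unfolding is_cat_def hom_def by blast

lemma comp_arr: "f \<in> Ar \<Longrightarrow> g \<in> Ar \<Longrightarrow> cd f = dm g \<Longrightarrow>
   cmp f g \<in> Ar \<and> dm (cmp f g) = dm f \<and> cd (cmp f g) = cd g"
  using cat unfolding is_cat_def hom_def by blast

lemma id_l: "f \<in> Ar \<Longrightarrow> cmp (ii (dm f)) f = f"
  using cat unfolding is_cat_def by blast

lemma id_r: "f \<in> Ar \<Longrightarrow> cmp f (ii (cd f)) = f"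
  using cat unfolding is_cat_def by blast

lemma assoc: "f \<in> Ar \<Longrightarrow> g \<in> Ar \<Longrightarrow> h \<in> Ar \<Longrightarrow> cd f = dm g \<Longrightarrow> cd g = dm h \<Longrightarrow>
   cmp (cmp f g) h = cmp f (cmp g h)"
  using cat unfolding is_cat_def by blast

lemma rst_arr: "f \<in> Ar \<Longrightarrow> rs f \<in> Ar \<and> dm (rs f) = dm f \<and> cd (rs f) = dm f"
  using RC unfolding restriction_category_def hom_def by blast

lemma rst_l: "f \<in> Ar \<Longrightarrow> cmp (rs f) f = f"
  using RC unfolding restriction_category_def by blast

lemma rst_comm: "f \<in> Ar \<Longrightarrow> g \<in> Ar \<Longrightarrow> dm f = dm g \<Longrightarrow> cmp (rs f) (rs g) = cmp (rs g) (rs f)"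
  using RC unfolding restriction_category_def by blast

lemma rst_R3: "f \<in> Ar \<Longrightarrow> g \<in> Ar \<Longrightarrow> dm f = dm g \<Longrightarrow> cmp (rs g) (rs f) = rs (cmp (rs g) f)"
  using RC unfolding restriction_category_def by blast

lemma rst_R4: "f \<in> Ar \<Longrightarrow> g \<in> Ar \<Longrightarrow> cd f = dm g \<Longrightarrow> cmp f (rs g) = cmp (rs (cmp f g)) f"
  using RC unfolding restriction_category_def by blast

lemma rst_id: "A \<in> Ob \<Longrightarrow> rs (ii A) = ii A"
proof -
  assume A: "A \<in> Ob"
  have i: "ii A \<in> Ar" "dm (ii A) = A" "cd (ii A) = A" using id_hom[OF A] by auto
  have "rs (ii A) = cmp (rs (ii A)) (ii (cd (rs (ii A))))" using id_r rst_arr i by metis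
  also have "\<dots> = cmp (rs (ii A)) (ii A)" using rst_arr i by simp
  also have "\<dots> = ii A" using rst_l i by simp
  finally show ?thesis .
qed

lemma rst_rst: "f \<in> Ar \<Longrightarrow> rs (rs f) = rs f"
proof -
  assume f: "f \<in> Ar"
  have i: "ii (dm f) \<in> Ar" "dm (ii (dm f)) = dm f" "cd (ii (dm f)) = dm f" using id_hom arr_ob f by auto
  have "cmp (rs f) (rs (ii (dm f))) = rs (cmp (rs f) (ii (dm f)))" using rst_R3[OF i(1) f] i by simp
  moreover have "rs (ii (dm f)) = ii (dm f)" using rst_id arr_ob f by auto
  moreover have "cmp (rs f) (ii (dm f)) = rs f" using id_r rst_arr f by metis
  ultimately show ?thesis by simp
qed

lemma rst_idem: "f \<in> Ar \<Longrightarrow> cmp (rs f) (rs f) = rs f"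
  using rst_l[of "rs f"] rst_arr rst_rst by metis

lemma rst_comp: "f \<in> Ar \<Longrightarrow> g \<in> Ar \<Longrightarrow> cd f = dm g \<Longrightarrow> rs (cmp f (rs g)) = rs (cmp f g)"
proof -
  assume f: "f \<in> Ar" and g: "g \<in> Ar" and fg: "cd f = dm g"
  have c: "cmp f g \<in> Ar" "dm (cmp f g) = dm f" using comp_arr f g fg by auto
  have r: "rs f \<in> Ar" "dm (rs f) = dm f" "cd (rs f) = dm f" using rst_arr f by auto
  have "rs (cmp f (rs g)) = rs (cmp (rs (cmp f g)) f)" using rst_R4 f g fg by simp
  also have "\<dots> = cmp (rs (cmp f g)) (rs f)" using rst_R3[OF f c(1)] c by simp
  also have "\<dots> = cmp (rs f) (rs (cmp f g))" using rst_comm[OF f c(1)] c by simp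
  also have "\<dots> = rs (cmp (rs f) (cmp f g))" using rst_R3[OF c(1) f] c by simp
  also have "cmp (rs f) (cmp f g) = cmp f g" using assoc[OF r(1) f g] r fg rst_l f by simp
  finally show ?thesis .
qed

lemma ri_comm: "a \<in> Ar \<Longrightarrow> b \<in> Ar \<Longrightarrow> dm a = dm b \<Longrightarrow> rs a = a \<Longrightarrow> rs b = b \<Longrightarrow> cmp a b = cmp b a"
  using rst_comm by metis

lemma ri_idem: "a \<in> Ar \<Longrightarrow> rs a = a \<Longrightarrow> cmp a a = a"
  using rst_l by metis


lemma L_sel[simp]:
  "cObj (L X) = L_objs X"
  "cDom (L X) (s, f, t) = s"
  "cCod (L X) (s, f, t) = t"
  "cId (L X) (A, a) = ((A, a), a, (A, a))"
  "cComp (L X) (s, f, t) (s', g, t') = (s, cmp f g, t')"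
  "cL (L X) (A, a) = (A, ii A)"
  "cEta (L X) (A, a) = ((A, a), a, (A, ii A))"
  by (simp_all add: L_def)

lemma Lobj_iff[simp]: "(A, a) \<in> L_objs X \<longleftrightarrow> A \<in> Ob \<and> a \<in> Ar \<and> dm a = A \<and> cd a = A \<and> rs a = a"
  by (auto simp: L_objs_def restriction_idempotent_def hom_def)

lemma Larr_iff[simp]: "((A, a), f, (B, b)) \<in> cArr (L X) \<longleftrightarrow>
   (A, a) \<in> L_objs X \<and> (B, b) \<in> L_objs X \<and> f \<in> Ar \<and> dm f = A \<and> cd f = B \<and> rs f = a \<and> cmp f b = f"
  by (auto simp: L_def hom_def)

lemma tri: obtains A a f B b where "x = ((A, a), f, (B, b))"
  by (metis prod.collapse)

lemma pr: obtains A a where "x = (A, a)"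
  by (metis prod.collapse)

lemma L_cat: "is_cat (L X)"
proof -
  have 1: "\<forall>x\<in>cArr (L X). cDom (L X) x \<in> cObj (L X) \<and> cCod (L X) x \<in> cObj (L X)"
  proof (intro ballI)
    fix x assume "x \<in> cArr (L X)"
    then show "cDom (L X) x \<in> cObj (L X) \<and> cCod (L X) x \<in> cObj (L X)"
      by (cases x rule: tri) auto
  qed
  have 2: "\<forall>M\<in>cObj (L X). cId (L X) M \<in> hom (L X) M M"
  proof (intro ballI)
    fix M assume "M \<in> cObj (L X)"
    then show "cId (L X) M \<in> hom (L X) M M"
      by (cases M rule: pr) (auto simp: ri_idem hom_def)
  qed
  have 3: "\<forall>x\<in>cArr (L X). \<forall>y\<in>cArr (L X). cCod (L X) x = cDom (L X) y \<longrightarrow>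
         cComp (L X) x y \<in> hom (L X) (cDom (L X) x) (cCod (L X) y)"
  proof (intro ballI impI)
    fix x y assume x: "x \<in> cArr (L X)" and y: "y \<in> cArr (L X)" and xy: "cCod (L X) x = cDom (L X) y"
    obtain A a f B b where xe: "x = ((A, a), f, (B, b))" by (rule tri)
    obtain B' b' g C c where ye: "y = ((B', b'), g, (C, c))" by (rule tri)
    have hx: "A \<in> Ob" "a \<in> Ar" "dm a = A" "cd a = A" "rs a = a" "B \<in> Ob" "b \<in> Ar" "dm b = B" "cd b = B" "rs b = b"
        "f \<in> Ar" "dm f = A" "cd f = B" "rs f = a" "cmp f b = f" using x xe by auto
    have hy: "B' = B" "b' = b" using xy xe ye by auto
    have hy2: "C \<in> Ob" "c \<in> Ar" "dm c = C" "cd c = C" "rs c = c"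
        "g \<in> Ar" "dm g = B" "cd g = C" "rs g = b" "cmp g c = g" using y ye hy by auto
    have fg: "cmp f g \<in> Ar" "dm (cmp f g) = A" "cd (cmp f g) = C" using comp_arr hx hy2 by auto
    have r: "rs (cmp f g) = a" using rst_comp[of f g] hx hy2 by simp
    have e: "cmp (cmp f g) c = cmp f g" using assoc[of f g c] hx hy2 by simp
    show "cComp (L X) x y \<in> hom (L X) (cDom (L X) x) (cCod (L X) y)"
      using xe ye hy hx hy2 fg r e by (auto simp: hom_def)
  qed
  have 4: "\<forall>x\<in>cArr (L X). cComp (L X) (cId (L X) (cDom (L X) x)) x = x \<and> cComp (L X) x (cId (L X) (cCod (L X) x)) = x"
  proof (intro ballI)
    fix x assume x: "x \<in> cArr (L X)"
    obtain A a f B b where xe: "x = ((A, a), f, (B, b))" by (rule tri)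
    have hx: "f \<in> Ar" "rs f = a" "cmp f b = f" using x xe by auto
    show "cComp (L X) (cId (L X) (cDom (L X) x)) x = x \<and> cComp (L X) x (cId (L X) (cCod (L X) x)) = x"
      using xe hx rst_l by auto
  qed
  have 5: "\<forall>x\<in>cArr (L X). \<forall>y\<in>cArr (L X). \<forall>z\<in>cArr (L X). cCod (L X) x = cDom (L X) y \<longrightarrow> cCod (L X) y = cDom (L X) z \<longrightarrow>
         cComp (L X) (cComp (L X) x y) z = cComp (L X) x (cComp (L X) y z)"
  proof (intro ballI impI)
    fix x y z assume x: "x \<in> cArr (L X)" and y: "y \<in> cArr (L X)" and z: "z \<in> cArr (L X)"
      and xy: "cCod (L X) x = cDom (L X) y" and yz: "cCod (L X) y = cDom (L X) z"
    obtain A a f B b where xe: "x = ((A, a), f, (B, b))" by (rule tri)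
    obtain B' b' g C c where ye: "y = ((B', b'), g, (C, c))" by (rule tri)
    obtain C' c' h D d where ze: "z = ((C', c'), h, (D, d))" by (rule tri)
    have "f \<in> Ar" "g \<in> Ar" "h \<in> Ar" "cd f = dm g" "cd g = dm h" using x y z xy yz xe ye ze by auto
    then show "cComp (L X) (cComp (L X) x y) z = cComp (L X) x (cComp (L X) y z)"
      using assoc xe ye ze by simp
  qed
  show ?thesis unfolding is_cat_def using 1 2 3 4 5 by blast
qed

lemma id_Lobj: "A \<in> Ob \<Longrightarrow> (A, ii A) \<in> L_objs X"
  using id_hom rst_id by auto

lemma L_local_a: "M \<in> cObj (L X) \<Longrightarrow> cL (L X) M \<in> cObj (L X) \<and> cEta (L X) M \<in> hom (L X) M (cL (L X) M) \<and> monic (L X) (cEta (L X) M) \<and>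
        cL (L X) (cL (L X) M) = cL (L X) M \<and> cEta (L X) (cL (L X) M) = cId (L X) (cL (L X) M)"
proof -
  assume M: "M \<in> cObj (L X)"
  obtain A a where Me: "M = (A, a)" by (rule pr)
  have h: "A \<in> Ob" "a \<in> Ar" "dm a = A" "cd a = A" "rs a = a" using M Me by auto
  have i: "ii A \<in> Ar" "dm (ii A) = A" "cd (ii A) = A" "rs (ii A) = ii A" using id_hom rst_id h by auto
  have ca: "cmp a (ii A) = a" using id_r h by metis
  have mon: "monic (L X) (cEta (L X) M)"
    unfolding monic_def
  proof (intro conjI ballI impI)
    show "cEta (L X) M \<in> cArr (L X)" using Me h i ca by simp
  next
    fix x y assume x: "x \<in> cArr (L X)" and y: "y \<in> cArr (L X)" and d: "cDom (L X) x = cDom (L X) y"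
      and cx: "cCod (L X) x = cDom (L X) (cEta (L X) M)" and cy: "cCod (L X) y = cDom (L X) (cEta (L X) M)"
      and e: "cComp (L X) x (cEta (L X) M) = cComp (L X) y (cEta (L X) M)"
    obtain C c f D d where xe: "x = ((C, c), f, (D, d))" by (rule tri)
    obtain C' c' g D' d' where ye: "y = ((C', c'), g, (D', d'))" by (rule tri)
    have "D = A" "d = a" "D' = A" "d' = a" "C = C'" "c = c'" using cx cy d Me xe ye by auto
    moreover have "cmp f d = f" "cmp g d' = g" using x y xe ye by auto
    moreover have "cmp f a = cmp g a" using e xe ye Me by simp
    ultimately show "x = y" using xe ye by simp
  qed
  show ?thesis using Me h i ca mon id_Lobj by (auto simp: hom_def)
qed

lemma L_local_b: "M \<in> cObj (L X) \<Longrightarrow> N \<in> cObj (L X) \<Longrightarrow> fL \<in> hom (L X) N (cL (L X) M) \<Longrightarrow>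
        \<exists>m g. is_pullback (L X) m g fL (cEta (L X) M) \<and> cL (L X) (cDom (L X) m) = cL (L X) N \<and>
              cComp (L X) m (cEta (L X) N) = cEta (L X) (cDom (L X) m)"
proof -
  assume M: "M \<in> cObj (L X)" and N: "N \<in> cObj (L X)" and fL: "fL \<in> hom (L X) N (cL (L X) M)"
  obtain A a where Me: "M = (A, a)" by (rule pr)
  obtain B b where Ne: "N = (B, b)" by (rule pr)
  obtain B' b' f A' a' where fe: "fL = ((B', b'), f, (A', a'))" by (rule tri)
  have hM: "A \<in> Ob" "a \<in> Ar" "dm a = A" "cd a = A" "rs a = a" using M Me by auto
  have hN: "B \<in> Ob" "b \<in> Ar" "dm b = B" "cd b = B" "rs b = b" using N Ne by auto
  have fe2: "B' = B" "b' = b" "A' = A" "a' = ii A" using fL fe Me Ne by (auto simp: hom_def)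
  have hf: "f \<in> Ar" "dm f = B" "cd f = A" "rs f = b" "cmp f (ii A) = f" using fL fe fe2 by (auto simp: hom_def)
  have i: "ii A \<in> Ar" "dm (ii A) = A" "cd (ii A) = A" "rs (ii A) = ii A" using id_hom rst_id hM by auto
  define fa where "fa = cmp f a"
  define r where "r = rs fa"
  have hfa: "fa \<in> Ar" "dm fa = B" "cd fa = A" using comp_arr hf hM fa_def by auto
  have hr: "r \<in> Ar" "dm r = B" "cd r = B" "rs r = r" using rst_arr rst_rst hfa r_def by auto
  have faa: "cmp fa a = fa" using assoc[of f a a] ri_idem hf hM fa_def by simp
  have rb: "cmp r b = r"
  proof -
    have "cmp r b = cmp (rs fa) (rs f)" using r_def hf by simp
    also have "\<dots> = cmp (rs f) (rs fa)" using rst_comm hf hfa by metis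
    also have "\<dots> = rs (cmp (rs f) fa)" using rst_R3[of fa f] hf hfa by simp
    also have "cmp (rs f) fa = fa"
    proof -
      have "cmp (rs f) fa = cmp (cmp (rs f) f) a" using assoc[of "rs f" f a] rst_arr[of f] hf hM fa_def by simp
      then show ?thesis using rst_l[of f] hf fa_def by simp
    qed
    finally show ?thesis using r_def by simp
  qed
  have rf: "cmp r f = fa"
    using rst_R4[of f a] hf hM fa_def r_def by simp
  define P where "P = (B, r)"
  define m where "m = (P, r, N)"
  define g where "g = (P, fa, M)"
  have Pob: "P \<in> L_objs X" using P_def hr hN by simp
  have marr: "m \<in> cArr (L X)" using m_def P_def Ne hr hN rb by simp
  have garr: "g \<in> cArr (L X)" using g_def P_def Me hr hM hN hfa faa r_def by simp
  have fLarr: "fL \<in> cArr (L X)" using fL by (simp add: hom_def)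
  have etaarr: "cEta (L X) M \<in> cArr (L X)" using Me hM i id_r by (simp, metis)
  have pb: "is_pullback (L X) m g fL (cEta (L X) M)"
    unfolding is_pullback_def
  proof (intro conjI ballI impI)
    show "m \<in> cArr (L X)" "g \<in> cArr (L X)" "fL \<in> cArr (L X)" "cEta (L X) M \<in> cArr (L X)"
      using marr garr fLarr etaarr by auto
    show "cDom (L X) m = cDom (L X) g" "cCod (L X) m = cDom (L X) fL" "cCod (L X) g = cDom (L X) (cEta (L X) M)"
      "cCod (L X) fL = cCod (L X) (cEta (L X) M)"
      using m_def g_def fe fe2 Ne Me by auto
    show "cComp (L X) m fL = cComp (L X) g (cEta (L X) M)"
      using m_def g_def fe fe2 Ne Me rf faa by simp
  next
    fix x y assume x: "x \<in> cArr (L X)" and y: "y \<in> cArr (L X)" and d: "cDom (L X) x = cDom (L X) y"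
      and cx: "cCod (L X) x = cDom (L X) fL" and cy: "cCod (L X) y = cDom (L X) (cEta (L X) M)"
      and e: "cComp (L X) x fL = cComp (L X) y (cEta (L X) M)"
    obtain C c x' D d' where xe: "x = ((C, c), x', (D, d'))" by (rule tri)
    obtain C' c' y' E e' where ye: "y = ((C', c'), y', (E, e'))" by (rule tri)
    have eqs: "D = B" "d' = b" "E = A" "e' = a" "C' = C" "c' = c" using cx cy d xe ye fe fe2 Me by auto
    have hx: "(C, c) \<in> L_objs X" "x' \<in> Ar" "dm x' = C" "cd x' = B" "rs x' = c" "cmp x' b = x'"
      using x xe eqs by auto
    have hy: "y' \<in> Ar" "dm y' = C" "cd y' = A" "rs y' = c" "cmp y' a = y'"
      using y ye eqs by auto
    have xf: "cmp x' f = y'" using e xe ye eqs fe fe2 Me hy by simp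
    have xfa: "cmp x' fa = y'" using assoc[of x' f a] hx hf hM fa_def xf hy by simp
    have xr: "cmp x' r = x'"
      using rst_R4[of x' fa] hx hfa xfa hy rst_l[of x'] r_def by simp
    let ?u = "((C, c), x', P)"
    show "\<exists>!u. u \<in> hom (L X) (cDom (L X) x) (cDom (L X) m) \<and> cComp (L X) u m = x \<and> cComp (L X) u g = y"
    proof (rule ex1I[of _ ?u])
      show "?u \<in> hom (L X) (cDom (L X) x) (cDom (L X) m) \<and> cComp (L X) ?u m = x \<and> cComp (L X) ?u g = y"
        using hx xr Pob P_def xe ye eqs m_def g_def xfa Me Ne by (auto simp: hom_def)
    next
      fix u assume u: "u \<in> hom (L X) (cDom (L X) x) (cDom (L X) m) \<and> cComp (L X) u m = x \<and> cComp (L X) u g = y"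
      obtain C2 c2 u' P2 p2 where ue: "u = ((C2, c2), u', (P2, p2))" by (rule tri)
      have "C2 = C" "c2 = c" "P2 = B" "p2 = r" using u ue xe m_def P_def by (auto simp: hom_def)
      moreover have "cmp u' p2 = u'" using u ue by (auto simp: hom_def)
      moreover have "cmp u' r = x'" using u ue xe m_def by auto
      ultimately show "u = ?u" using ue P_def by simp
    qed
  qed
  have "cL (L X) (cDom (L X) m) = cL (L X) N" using m_def P_def Ne by simp
  moreover have "cComp (L X) m (cEta (L X) N) = cEta (L X) (cDom (L X) m)"
    using m_def P_def Ne rb by simp
  ultimately show ?thesis using pb by blast
qed

lemma L_local: "local_category (L X)"
  unfolding local_category_def using L_cat L_local_a L_local_b by blast

lemma rclass_single:
  assumes U: "(A, a) \<in> L_objs X" and hT: "((A, a), h, T) \<in> cArr (L X)"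
  shows "rclass (L X) ((A, a), ((A, a), h, T)) = {((A, a), ((A, a), h, T))}"
proof
  let ?p = "((A, a), ((A, a), h, T))"
  obtain B b where Te: "T = (B, b)" by (rule pr)
  have hU: "A \<in> Ob" "a \<in> Ar" "dm a = A" "cd a = A" "rs a = a" using U by auto
  have hh: "h \<in> Ar" "dm h = A" "cd h = B" "rs h = a" "cmp h b = h" using hT Te by auto
  show "rclass (L X) ?p \<subseteq> {?p}"
  proof
    fix q assume q: "q \<in> rclass (L X) ?p"
    then have sp: "span_iso (L X) q ?p" by (simp add: rclass_def)
    obtain \<phi> where ph: "is_iso (L X) \<phi>" "cDom (L X) \<phi> = fst q" "cCod (L X) \<phi> = (A, a)"
      "cComp (L X) \<phi> (cEta (L X) (A, a)) = cEta (L X) (fst q)" "cComp (L X) \<phi> ((A, a), h, T) = snd q"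
      using sp unfolding span_iso_def by auto
    obtain A' a' where qe: "fst q = (A', a')" by (rule pr)
    obtain S s p' S2 s2 where pe: "\<phi> = ((S, s), p', (S2, s2))" by (rule tri)
    have pe2: "S = A'" "s = a'" "S2 = A" "s2 = a" using ph(2,3) pe qe by auto
    have parr: "\<phi> \<in> cArr (L X)" using ph(1) unfolding is_iso_def by (rule conjunct1)
    have hp: "p' \<in> Ar" "dm p' = A'" "cd p' = A" "rs p' = a'" "cmp p' a = p'"
      "A' \<in> Ob" "a' \<in> Ar" "dm a' = A'" "cd a' = A'" "rs a' = a'"
      using parr pe pe2 by auto
    have e1: "A' = A" "cmp p' a = a'" using ph(4) pe pe2 qe by auto
    have p'a: "p' = a'" using e1 hp by simp
    obtain \<psi> where ps: "\<psi> \<in> hom (L X) (cCod (L X) \<phi>) (cDom (L X) \<phi>)"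
      "cComp (L X) \<phi> \<psi> = cId (L X) (cDom (L X) \<phi>)" "cComp (L X) \<psi> \<phi> = cId (L X) (cCod (L X) \<phi>)"
      using ph(1) unfolding is_iso_def by blast
    obtain R r q' R2 r2 where pse: "\<psi> = ((R, r), q', (R2, r2))" by (rule tri)
    have pse2: "R = A" "r = a" "R2 = A'" "r2 = a'" using ps(1) pse ph(2,3) qe by (auto simp: hom_def)
    have hq: "q' \<in> Ar" "rs q' = a" "cmp q' a' = q'" using ps(1) pse pse2 by (auto simp: hom_def)
    have c1: "cmp p' q' = a'" using ps(2) pe pse pe2 pse2 by simp
    have c2: "cmp q' p' = a" using ps(3) pe pse pe2 pse2 by simp
    have q'a: "q' = a" using c2 hq p'a by simp
    have "cmp a' a = a'" using c1 p'a q'a by simp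
    moreover have "cmp a a' = a" using hq q'a by simp
    moreover have "cmp a a' = cmp a' a" using ri_comm[of a a'] hU hp e1 by simp
    ultimately have aa: "a' = a" by metis
    have "snd q = ((A, a), cmp a h, T)" using ph(5) pe pe2 p'a aa e1 by simp
    also have "cmp a h = h" using rst_l hh by metis
    finally have "snd q = ((A, a), h, T)" .
    then have "q = ?p" using qe e1 aa by (metis prod.collapse)
    then show "q \<in> {?p}" by simp
  qed
next
  let ?p = "((A, a), ((A, a), h, T))"
  obtain B b where Te: "T = (B, b)" by (rule pr)
  have hU: "A \<in> Ob" "a \<in> Ar" "dm a = A" "cd a = A" "rs a = a" using U by auto
  have hh: "h \<in> Ar" "dm h = A" "cd h = B" "rs h = a" "cmp h b = h" using hT Te by auto
  have aa: "cmp a a = a" using ri_idem hU by simp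
  have ah: "cmp a h = h" using rst_l hh by metis
  have a1: "cmp a (ii A) = a" using id_r hU by metis
  have idarr: "((A, a), a, (A, a)) \<in> cArr (L X)" using U hU aa by simp
  have ih: "((A, a), a, (A, a)) \<in> hom (L X) (A, a) (A, a)" using idarr by (simp add: hom_def)
  have iso: "is_iso (L X) ((A, a), a, (A, a))"
    unfolding is_iso_def
    apply (rule conjI[OF idarr])
    apply (rule bexI[of _ "((A, a), a, (A, a))"])
    using aa ih by simp_all
  have "span_iso (L X) ?p ?p"
    unfolding span_iso_def
    apply (rule exI[of _ "((A, a), a, (A, a))"])
    using iso aa ah a1 by simp
  then show "{?p} \<subseteq> rclass (L X) ?p"
    using U hT by (simp add: rclass_def hom_def)
qed

lemma rst_comp_le: "f \<in> Ar \<Longrightarrow> h \<in> Ar \<Longrightarrow> cd f = dm h \<Longrightarrow> cmp (rs (cmp f h)) (rs f) = rs (cmp f h)"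
proof -
  assume f: "f \<in> Ar" and h: "h \<in> Ar" and fh: "cd f = dm h"
  have c: "cmp f h \<in> Ar" "dm (cmp f h) = dm f" using comp_arr f h fh by auto
  have "cmp (rs (cmp f h)) (rs f) = cmp (rs f) (rs (cmp f h))" using rst_comm c f by metis
  also have "\<dots> = rs (cmp (rs f) (cmp f h))" using rst_R3[of "cmp f h" f] c f by simp
  also have "cmp (rs f) (cmp f h) = cmp (cmp (rs f) f) h" using assoc[of "rs f" f h] rst_arr[of f] f h fh by simp
  also have "\<dots> = cmp f h" using rst_l f by simp
  finally show ?thesis .
qed

lemma pt_ok: "f \<in> Ar \<Longrightarrow> (dm f, rs f) \<in> L_objs X \<and> ((dm f, rs f), f, (cd f, ii (cd f))) \<in> cArr (L X)"
  using rst_arr[of f] rst_rst[of f] id_Lobj[of "cd f"] arr_ob[of f] id_r[of f] by simp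

lemma rclass_pt: "f \<in> Ar \<Longrightarrow> rclass (L X) (ptL X f) = embL X f"
  unfolding ptL_def embL_def using rclass_single pt_ok by blast

lemma total_iff: "total_obj (L X) (A, a) \<longleftrightarrow> A \<in> Ob \<and> a = ii A"
  using id_Lobj by (auto simp: total_obj_def)

lemma R_obj: "cObj (R (L X)) = (\<lambda>A. (A, ii A)) ` Ob"
proof -
  have "cObj (R (L X)) = {M. total_obj (L X) M}" by (simp add: R_def)
  also have "\<dots> = (\<lambda>A. (A, ii A)) ` Ob"
  proof
    show "{M. total_obj (L X) M} \<subseteq> (\<lambda>A. (A, ii A)) ` Ob"
    proof
      fix M assume "M \<in> {M. total_obj (L X) M}"
      moreover obtain A a where "M = (A, a)" by (rule pr)
      ultimately show "M \<in> (\<lambda>A. (A, ii A)) ` Ob" using total_iff by auto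
    qed
    show "(\<lambda>A. (A, ii A)) ` Ob \<subseteq> {M. total_obj (L X) M}" using total_iff by auto
  qed
  finally show ?thesis .
qed

lemma R_arr: "cArr (R (L X)) = embL X ` Ar"
proof -
  have e: "cArr (R (L X)) = {rclass (L X) (U, f) | U f. U \<in> cObj (L X) \<and> f \<in> cArr (L X) \<and> cDom (L X) f = U \<and>
                                          total_obj (L X) (cCod (L X) f)}" by (simp add: R_def)
  show ?thesis unfolding e
  proof
    show "{rclass (L X) (U, f) | U f. U \<in> cObj (L X) \<and> f \<in> cArr (L X) \<and> cDom (L X) f = U \<and>
            total_obj (L X) (cCod (L X) f)} \<subseteq> embL X ` Ar"
    proof
      fix c assume "c \<in> {rclass (L X) (U, f) | U f. U \<in> cObj (L X) \<and> f \<in> cArr (L X) \<and> cDom (L X) f = U \<and>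
            total_obj (L X) (cCod (L X) f)}"
      then obtain U fL where c: "c = rclass (L X) (U, fL)" "U \<in> cObj (L X)" "fL \<in> cArr (L X)" "cDom (L X) fL = U"
        "total_obj (L X) (cCod (L X) fL)" by blast
      obtain A a f B b where fe: "fL = ((A, a), f, (B, b))" by (rule tri)
      have h: "f \<in> Ar" "dm f = A" "cd f = B" "rs f = a" "b = ii B" "U = (A, a)"
        using c fe total_iff by auto
      have "c = rclass (L X) (ptL X f)" using c(1) fe h by (simp add: ptL_def)
      then show "c \<in> embL X ` Ar" using rclass_pt h by auto
    qed
    show "embL X ` Ar \<subseteq> {rclass (L X) (U, f) | U f. U \<in> cObj (L X) \<and> f \<in> cArr (L X) \<and> cDom (L X) f = U \<and>
            total_obj (L X) (cCod (L X) f)}"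
    proof
      fix c assume "c \<in> embL X ` Ar"
      then obtain f where f: "f \<in> Ar" "c = embL X f" by blast
      have "c = rclass (L X) ((dm f, rs f), ((dm f, rs f), f, (cd f, ii (cd f))))"
        using rclass_pt f by (simp add: ptL_def)
      moreover have "total_obj (L X) (cd f, ii (cd f))" using total_iff arr_ob f by simp
      ultimately show "c \<in> {rclass (L X) (U, f) | U f. U \<in> cObj (L X) \<and> f \<in> cArr (L X) \<and> cDom (L X) f = U \<and>
            total_obj (L X) (cCod (L X) f)}"
        using pt_ok[OF f(1)] apply -
        apply (rule CollectI)
        apply (rule exI[of _ "(dm f, rs f)"])
        apply (rule exI[of _ "((dm f, rs f), f, (cd f, ii (cd f)))"])
        by simp
    qed
  qed
qed

lemma R_dom: "cDom (R (L X)) (embL X f) = (dm f, ii (dm f))"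
  by (simp add: R_def ptL_def)

lemma R_cod: "cCod (R (L X)) (embL X f) = (cd f, ii (cd f))"
  by (simp add: R_def ptL_def)

lemma R_id: "A \<in> Ob \<Longrightarrow> cId (R (L X)) (A, ii A) = embL X (ii A)"
proof -
  assume A: "A \<in> Ob"
  have "cId (R (L X)) (A, ii A) = rclass (L X) ((A, ii A), cId (L X) (A, ii A))" by (simp add: R_def)
  also have "\<dots> = rclass (L X) (ptL X (ii A))" using id_hom[OF A] rst_id[OF A] by (simp add: ptL_def)
  finally show ?thesis using rclass_pt id_hom A by simp
qed

lemma R_rst: "f \<in> Ar \<Longrightarrow> cRst (R (L X)) (embL X f) = embL X (rs f)"
proof -
  assume f: "f \<in> Ar"
  have "cRst (R (L X)) (embL X f) = rclass (L X) ((dm f, rs f), cEta (L X) (dm f, rs f))" by (simp add: R_def ptL_def)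
  also have "\<dots> = rclass (L X) (ptL X (rs f))" using rst_arr[OF f] rst_rst[OF f] by (simp add: ptL_def)
  finally show ?thesis using rclass_pt rst_arr f by simp
qed

lemma R_comp:
  assumes f: "f \<in> Ar" and g: "g \<in> Ar" and fg: "cd f = dm g"
  shows "cComp (R (L X)) (embL X f) (embL X g) = embL X (cmp f g)"
proof -
  define A where "A = dm f"
  define B where "B = cd f"
  define C where "C = cd g"
  define fL where "fL = ((A, rs f), f, (B, ii B))"
  define gL where "gL = ((B, rs g), g, (C, ii C))"
  define Q where "Q = (\<lambda>mp. is_pullback (L X) (fst mp) (snd mp) fL (cEta (L X) (B, rs g)) \<and>
                   cL (L X) (cDom (L X) (fst mp)) = cL (L X) (A, rs f) \<and>
                   cComp (L X) (fst mp) (cEta (L X) (A, rs f)) = cEta (L X) (cDom (L X) (fst mp)))"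
  have e0: "cComp (R (L X)) (embL X f) (embL X g) = rcomp (L X) (embL X f) (embL X g)"
    by (simp add: R_def)
  have e1: "rcomp (L X) (embL X f) (embL X g) =
      rclass (L X) (cDom (L X) (fst (SOME mp. Q mp)), cComp (L X) (snd (SOME mp. Q mp)) gL)"
    unfolding rcomp_def Let_def rrep_emb ptL_def prod.sel Q_def fL_def gL_def A_def B_def C_def fg ..
  have hf: "f \<in> Ar" "dm f = A" "cd f = B" using f A_def B_def by auto
  have hg: "g \<in> Ar" "dm g = B" "cd g = C" using g fg B_def C_def by auto
  have obA: "A \<in> Ob" "B \<in> Ob" "C \<in> Ob" using arr_ob hf hg by metis+
  have rf: "rs f \<in> Ar" "dm (rs f) = A" "cd (rs f) = A" "rs (rs f) = rs f" using rst_arr rst_rst hf by auto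
  have rg: "rs g \<in> Ar" "dm (rs g) = B" "cd (rs g) = B" "rs (rs g) = rs g" using rst_arr rst_rst hg by auto
  have Uob: "(A, rs f) \<in> L_objs X" "(B, rs g) \<in> L_objs X" using rf rg obA by auto
  have fLh: "fL \<in> hom (L X) (A, rs f) (cL (L X) (B, rs g))"
    using pt_ok[OF f] hf unfolding fL_def hom_def by simp
  have "\<exists>m gg. is_pullback (L X) m gg fL (cEta (L X) (B, rs g)) \<and> cL (L X) (cDom (L X) m) = cL (L X) (A, rs f) \<and>
              cComp (L X) m (cEta (L X) (A, rs f)) = cEta (L X) (cDom (L X) m)"
    using L_local_b[of "(B, rs g)" "(A, rs f)" fL] Uob fLh by simp
  then have "\<exists>mp. Q mp" unfolding Q_def by auto
  then have Qm: "Q (SOME mp. Q mp)" by (rule someI_ex)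
  define mp where "mp = (SOME mp. Q mp)"
  have Qmp: "Q mp" using Qm mp_def by simp
  have pb: "is_pullback (L X) (fst mp) (snd mp) fL (cEta (L X) (B, rs g))" using Qmp Q_def by simp
  note pb' = pb[unfolded is_pullback_def]
  have m_arr: "fst mp \<in> cArr (L X)" using pb' by (elim conjE)
  have g_arr: "snd mp \<in> cArr (L X)" using pb' by (elim conjE)
  have dmg: "cDom (L X) (fst mp) = cDom (L X) (snd mp)" using pb' by (elim conjE)
  have cdm: "cCod (L X) (fst mp) = cDom (L X) fL" using pb' by (elim conjE)
  have cdg: "cCod (L X) (snd mp) = cDom (L X) (cEta (L X) (B, rs g))" using pb' by (elim conjE)
  have sq: "cComp (L X) (fst mp) fL = cComp (L X) (snd mp) (cEta (L X) (B, rs g))" using pb' by (elim conjE)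
  have univ: "\<forall>x\<in>cArr (L X). \<forall>y\<in>cArr (L X). cDom (L X) x = cDom (L X) y \<longrightarrow> cCod (L X) x = cDom (L X) fL \<longrightarrow>
        cCod (L X) y = cDom (L X) (cEta (L X) (B, rs g)) \<longrightarrow> cComp (L X) x fL = cComp (L X) y (cEta (L X) (B, rs g)) \<longrightarrow>
        (\<exists>!u. u \<in> hom (L X) (cDom (L X) x) (cDom (L X) (fst mp)) \<and> cComp (L X) u (fst mp) = x \<and> cComp (L X) u (snd mp) = y)"
    using pb' by (elim conjE)
  have Lm: "cL (L X) (cDom (L X) (fst mp)) = cL (L X) (A, rs f)" using Qmp Q_def by simp
  have etm: "cComp (L X) (fst mp) (cEta (L X) (A, rs f)) = cEta (L X) (cDom (L X) (fst mp))" using Qmp Q_def by simp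
  obtain A2 p m' U1 u1 where me: "fst mp = ((A2, p), m', (U1, u1))" by (rule tri)
  obtain A3 p3 g' V1 v1 where ge: "snd mp = ((A3, p3), g', (V1, v1))" by (rule tri)
  have e2: "U1 = A" "u1 = rs f" "A3 = A2" "p3 = p" "V1 = B" "v1 = rs g" using me ge dmg cdm cdg fL_def by auto
  have e3: "A2 = A" using Lm me by simp
  have hm: "m' \<in> Ar" "rs m' = p" "cmp m' (rs f) = m'" "p \<in> Ar" "dm p = A" "cd p = A" "rs p = p"
    using m_arr me e2 e3 by auto
  have mp': "m' = p" using etm me e2 e3 hm by simp
  have hg': "g' \<in> Ar" "dm g' = A" "cd g' = B" "rs g' = p" "cmp g' (rs g) = g'"
    using g_arr ge e2 e3 by auto
  have g'e: "cmp p f = g'" using sq me ge e2 e3 mp' fL_def hg' by simp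
  define fr where "fr = cmp f (rs g)"
  define q where "q = rs fr"
  have hfr: "fr \<in> Ar" "dm fr = A" "cd fr = B" using comp_arr hf rg fr_def by auto
  have hq: "q \<in> Ar" "dm q = A" "cd q = A" "rs q = q" using rst_arr rst_rst hfr q_def by auto
  have q_fg: "q = rs (cmp f g)" using rst_comp hf hg q_def fr_def by simp
  have qf: "cmp q f = fr" using rst_R4[of f g] hf hg q_fg fr_def by simp
  have frr: "cmp fr (rs g) = fr" using assoc[of f "rs g" "rs g"] rst_idem[of g] hf hg rg fr_def by simp
  have qrf: "cmp q (rs f) = q" using rst_comp_le[of f "rs g"] hf rg q_def fr_def by simp
  define x where "x = ((A, q), q, (A, rs f))"
  define y where "y = ((A, q), fr, (B, rs g))"
  have xa: "x \<in> cArr (L X)" using x_def hq obA Uob qrf by simp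
  have ya: "y \<in> cArr (L X)" using y_def hq obA Uob hfr frr q_def by simp
  have "\<exists>!u. u \<in> hom (L X) (cDom (L X) x) (cDom (L X) (fst mp)) \<and> cComp (L X) u (fst mp) = x \<and> cComp (L X) u (snd mp) = y"
    apply (rule univ[rule_format, OF xa ya])
       apply (simp add: x_def y_def)
      apply (simp add: x_def fL_def)
     apply (simp add: y_def)
    using x_def y_def fL_def qf frr by simp
  then obtain u where u: "u \<in> hom (L X) (cDom (L X) x) (cDom (L X) (fst mp))" "cComp (L X) u (fst mp) = x" by blast
  obtain Q1 q1 u' Q2 q2 where ue: "u = ((Q1, q1), u', (Q2, q2))" by (rule tri)
  have ue2: "Q1 = A" "q1 = q" "Q2 = A" "q2 = p" using u(1) ue x_def me e3 by (auto simp: hom_def)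
  have hu: "cmp u' p = u'" "cmp u' p = q" using u ue ue2 me mp' x_def by (auto simp: hom_def)
  have qp: "cmp q p = q" using hu by simp
  have pfr: "cmp p f = cmp p fr"
  proof -
    have "cmp p f = cmp (cmp p f) (rs g)" using g'e hg' by simp
    also have "\<dots> = cmp p fr" using assoc[of p f "rs g"] hm hf rg fr_def by simp
    finally show ?thesis .
  qed
  have pq: "cmp p q = p"
  proof -
    have "p = rs (cmp p f)" using g'e hg' by simp
    also have "\<dots> = rs (cmp (rs p) fr)" using pfr hm by simp
    also have "\<dots> = cmp (rs p) (rs fr)" using rst_R3[of fr p] hfr hm by simp
    finally show ?thesis using hm q_def by simp
  qed
  have pq2: "p = q" using pq qp ri_comm[of p q] hm hq by metis
  have res: "cComp (L X) (snd mp) gL = ((A, q), cmp f g, (C, ii C))"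
  proof -
    have "cComp (L X) (snd mp) gL = ((A, p), cmp g' g, (C, ii C))" using ge e2 e3 gL_def by simp
    moreover have "cmp g' g = cmp f g"
    proof -
      have "cmp g' g = cmp (cmp f (rs g)) g" using g'e pq2 qf fr_def by simp
      also have "\<dots> = cmp f (cmp (rs g) g)" using assoc[of f "rs g" g] hf rg hg by simp
      finally show ?thesis using rst_l hg by simp
    qed
    ultimately show ?thesis using pq2 by simp
  qed
  have "cComp (R (L X)) (embL X f) (embL X g) = rclass (L X) ((A, q), ((A, q), cmp f g, (C, ii C)))"
    using e0 e1 mp_def[symmetric] res me e3 pq2 by simp
  also have "\<dots> = rclass (L X) (ptL X (cmp f g))"
    using comp_arr[OF f g fg] q_fg hf hg by (simp add: ptL_def)
  also have "\<dots> = embL X (cmp f g)" using rclass_pt comp_arr[OF f g fg] by simp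
  finally show ?thesis .
qed

lemma R_rc: "restriction_category (R (L X))"
proof -
  have obimg: "\<And>A. A \<in> Ob \<Longrightarrow> (A, ii A) \<in> (\<lambda>A. (A, ii A)) ` Ob" by blast
  have arimg: "\<And>h. h \<in> Ar \<Longrightarrow> embL X h \<in> embL X ` Ar" by blast
  show ?thesis
  unfolding restriction_category_def is_cat_def hom_def R_arr R_obj ball_img
  proof (intro conjI ballI impI)
    fix f assume f: "f \<in> Ar"
    show "cDom (R (L X)) (embL X f) \<in> (\<lambda>A. (A, ii A)) ` Ob" using f arr_ob obimg R_dom by simp
    show "cCod (R (L X)) (embL X f) \<in> (\<lambda>A. (A, ii A)) ` Ob" using f arr_ob obimg R_cod by simp
  next
    fix A assume A: "A \<in> Ob"
    show "cId (R (L X)) (A, ii A) \<in> {f \<in> embL X ` Ar. cDom (R (L X)) f = (A, ii A) \<and> cCod (R (L X)) f = (A, ii A)}"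
      using A R_id id_hom arimg R_dom R_cod by simp
  next
    fix f g assume f: "f \<in> Ar" and g: "g \<in> Ar" and fg: "cCod (R (L X)) (embL X f) = cDom (R (L X)) (embL X g)"
    have fg': "cd f = dm g" using fg R_dom R_cod by simp
    show "cComp (R (L X)) (embL X f) (embL X g) \<in> {h \<in> embL X ` Ar. cDom (R (L X)) h = cDom (R (L X)) (embL X f) \<and> cCod (R (L X)) h = cCod (R (L X)) (embL X g)}"
      using R_comp[OF f g fg'] comp_arr[OF f g fg'] arimg R_dom R_cod by simp
  next
    fix f assume f: "f \<in> Ar"
    show "cComp (R (L X)) (cId (R (L X)) (cDom (R (L X)) (embL X f))) (embL X f) = embL X f"
      using R_dom R_id R_comp id_hom arr_ob id_l f by simp
    show "cComp (R (L X)) (embL X f) (cId (R (L X)) (cCod (R (L X)) (embL X f))) = embL X f"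
      using R_cod R_id R_comp id_hom arr_ob id_r f by simp
  next
    fix f g h assume f: "f \<in> Ar" and g: "g \<in> Ar" and h: "h \<in> Ar"
      and fg: "cCod (R (L X)) (embL X f) = cDom (R (L X)) (embL X g)"
      and gh: "cCod (R (L X)) (embL X g) = cDom (R (L X)) (embL X h)"
    have fg': "cd f = dm g" using fg R_dom R_cod by simp
    have gh': "cd g = dm h" using gh R_dom R_cod by simp
    show "cComp (R (L X)) (cComp (R (L X)) (embL X f) (embL X g)) (embL X h) =
          cComp (R (L X)) (embL X f) (cComp (R (L X)) (embL X g) (embL X h))"
      using R_comp comp_arr assoc f g h fg' gh' by simp
  next
    fix f assume f: "f \<in> Ar"
    show "cRst (R (L X)) (embL X f) \<in> {h \<in> embL X ` Ar. cDom (R (L X)) h = cDom (R (L X)) (embL X f) \<and>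
           cCod (R (L X)) h = cDom (R (L X)) (embL X f)}"
      using R_rst rst_arr arimg R_dom R_cod f by simp
    show "cComp (R (L X)) (cRst (R (L X)) (embL X f)) (embL X f) = embL X f"
      using R_rst R_comp rst_arr rst_l f by simp
  next
    fix f g assume f: "f \<in> Ar" and g: "g \<in> Ar" and fg: "cDom (R (L X)) (embL X f) = cDom (R (L X)) (embL X g)"
    have fg': "dm f = dm g" using fg R_dom by simp
    show "cComp (R (L X)) (cRst (R (L X)) (embL X f)) (cRst (R (L X)) (embL X g)) =
          cComp (R (L X)) (cRst (R (L X)) (embL X g)) (cRst (R (L X)) (embL X f))"
      using R_rst R_comp rst_arr rst_comm f g fg' by simp
    have c: "cmp (rs g) f \<in> Ar" using comp_arr rst_arr f g fg' by simp
    show "cComp (R (L X)) (cRst (R (L X)) (embL X g)) (cRst (R (L X)) (embL X f)) =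
          cRst (R (L X)) (cComp (R (L X)) (cRst (R (L X)) (embL X g)) (embL X f))"
      using R_rst R_comp rst_arr rst_R3 f g fg' c by simp
  next
    fix f g assume f: "f \<in> Ar" and g: "g \<in> Ar" and fg: "cCod (R (L X)) (embL X f) = cDom (R (L X)) (embL X g)"
    have fg': "cd f = dm g" using fg R_dom R_cod by simp
    have c: "cmp f g \<in> Ar" "dm (cmp f g) = dm f" using comp_arr f g fg' by auto
    show "cComp (R (L X)) (embL X f) (cRst (R (L X)) (embL X g)) =
          cComp (R (L X)) (cRst (R (L X)) (cComp (R (L X)) (embL X f) (embL X g))) (embL X f)"
      using R_rst R_comp rst_arr rst_R4 f g fg' c by simp
  qed
qed

lemma R_iso: "iso_rcat (R (L X)) X phi_obj phi_arr"
proof -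
  have obimg: "\<And>A. A \<in> Ob \<Longrightarrow> (A, ii A) \<in> (\<lambda>A. (A, ii A)) ` Ob" by blast
  have arimg: "\<And>h. h \<in> Ar \<Longrightarrow> embL X h \<in> embL X ` Ar" by blast
  have F: "rfunctor (R (L X)) X phi_obj phi_arr"
    unfolding rfunctor_def is_functor_def hom_def R_arr R_obj ball_img
  proof (intro conjI ballI impI)
    fix A assume "A \<in> Ob" then show "phi_obj (A, ii A) \<in> Ob" by (simp add: phi_obj_def)
  next
    fix A assume "A \<in> Ob" then show "phi_arr (cId (R (L X)) (A, ii A)) = ii (phi_obj (A, ii A))"
      using R_id by (simp add: phi_obj_def)
  next
    fix f assume f: "f \<in> Ar"
    show "phi_arr (embL X f) \<in> {g \<in> Ar. dm g = phi_obj (cDom (R (L X)) (embL X f)) \<and> cd g = phi_obj (cCod (R (L X)) (embL X f))}"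
      using f R_dom R_cod by (simp add: phi_obj_def)
    show "phi_arr (cRst (R (L X)) (embL X f)) = rs (phi_arr (embL X f))" using f R_rst by simp
  next
    fix f g assume f: "f \<in> Ar" and g: "g \<in> Ar" and fg: "cCod (R (L X)) (embL X f) = cDom (R (L X)) (embL X g)"
    have fg': "cd f = dm g" using fg R_dom R_cod by simp
    show "phi_arr (cComp (R (L X)) (embL X f) (embL X g)) = cmp (phi_arr (embL X f)) (phi_arr (embL X g))"
      using R_comp[OF f g fg'] by simp
  qed
  have G: "is_functor X (R (L X)) (\<lambda>A. (A, ii A)) (embL X)"
    unfolding is_functor_def hom_def R_arr R_obj
  proof (intro conjI ballI impI)
    fix A assume "A \<in> Ob" then show "(A, ii A) \<in> (\<lambda>A. (A, ii A)) ` Ob" by blast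
  next
    fix A assume "A \<in> Ob" then show "embL X (ii A) = cId (R (L X)) (A, ii A)" using R_id by simp
  next
    fix f assume f: "f \<in> Ar"
    show "embL X f \<in> {g \<in> embL X ` Ar. cDom (R (L X)) g = (dm f, ii (dm f)) \<and> cCod (R (L X)) g = (cd f, ii (cd f))}"
      using f R_dom R_cod by simp
  next
    fix f g assume f: "f \<in> Ar" and g: "g \<in> Ar" and fg: "cd f = dm g"
    show "embL X (cmp f g) = cComp (R (L X)) (embL X f) (embL X g)" using R_comp[OF f g fg] by simp
  qed
  have inv: "(\<forall>A\<in>cObj (R (L X)). (\<lambda>A. (A, ii A)) (phi_obj A) = A) \<and> (\<forall>B\<in>Ob. phi_obj ((\<lambda>A. (A, ii A)) B) = B) \<and>
        (\<forall>f\<in>cArr (R (L X)). embL X (phi_arr f) = f) \<and> (\<forall>g\<in>Ar. phi_arr (embL X g) = g)"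
    unfolding R_arr R_obj by (auto simp: phi_obj_def)
  show ?thesis unfolding iso_rcat_def
    apply (rule conjI[OF F])
    apply (rule exI[of _ "\<lambda>A. (A, ii A)"])
    apply (rule exI[of _ "embL X"])
    using G inv by (intro conjI) simp_all
qed

end

lemma natural_arr:
  assumes X: "restriction_category X" and Y: "restriction_category Y" and F: "rfunctor X Y Fo Fa"
    and c: "c \<in> cArr (R (L X))"
  shows "phi_arr (R_arr (L Y) (L_obj Fo Fa) (L_arr Fo Fa) c) = Fa (phi_arr c)"
proof -
  interpret x: rcat_loc X using X by (simp add: rcat_loc_def)
  interpret y: rcat_loc Y using Y by (simp add: rcat_loc_def)
  obtain f where f: "f \<in> cArr X" "c = embL X f" using c x.R_arr by auto
  have Ff: "Fa f \<in> cArr Y" "cDom Y (Fa f) = Fo (cDom X f)" "cCod Y (Fa f) = Fo (cCod X f)"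
    "Fa (cRst X f) = cRst Y (Fa f)" "Fa (cId X (cCod X f)) = cId Y (Fo (cCod X f))"
    using F f x.arr_ob[of f] unfolding rfunctor_def is_functor_def hom_def by auto
  have "R_arr (L Y) (L_obj Fo Fa) (L_arr Fo Fa) c = rclass (L Y) (ptL Y (Fa f))"
    using f Ff by (simp add: R_arr_def ptL_def L_obj_def L_arr_def)
  also have "\<dots> = embL Y (Fa f)" using y.rclass_pt Ff by simp
  finally show ?thesis using f by simp
qed

theorem proposition4p17:
  fixes X :: "('o,'a) rcat" and Y :: "('p,'b) rcat"
    and Fo :: "'o \<Rightarrow> 'p" and Fa :: "'a \<Rightarrow> 'b"
  assumes "restriction_category X"
  shows "local_category (L X) \<and> restriction_category (R (L X)) \<and>
         iso_rcat (R (L X)) X phi_obj phi_arr \<and>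
         (restriction_category Y \<and> rfunctor X Y Fo Fa \<longrightarrow>
            (\<forall>M\<in>cObj (R (L X)). phi_obj (L_obj Fo Fa M) = Fo (phi_obj M)) \<and>
            (\<forall>c\<in>cArr (R (L X)).
               phi_arr (R_arr (L Y) (L_obj Fo Fa) (L_arr Fo Fa) c) = Fa (phi_arr c)))"
proof -
  interpret x: rcat_loc X using assms by (simp add: rcat_loc_def)
  have o: "\<forall>M\<in>cObj (R (L X)). phi_obj (L_obj Fo Fa M) = Fo (phi_obj M)"
  proof
    fix M :: "'o \<times> 'a"
    obtain A a where "M = (A, a)" by (rule x.pr)
    then show "phi_obj (L_obj Fo Fa M) = Fo (phi_obj M)" by (simp add: phi_obj_def L_obj_def)
  qed
  have n: "restriction_category Y \<and> rfunctor X Y Fo Fa \<longrightarrow>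
     (\<forall>c\<in>cArr (R (L X)). phi_arr (R_arr (L Y) (L_obj Fo Fa) (L_arr Fo Fa) c) = Fa (phi_arr c))"
    using natural_arr[OF assms] by blast
  show ?thesis
  proof (intro conjI impI)
    show "local_category (L X)" by (rule x.L_local)
    show "restriction_category (R (L X))" by (rule x.R_rc)
    show "iso_rcat (R (L X)) X phi_obj phi_arr" by (rule x.R_iso)
    show "\<forall>M\<in>cObj (R (L X)). phi_obj (L_obj Fo Fa M) = Fo (phi_obj M)" by (rule o)
    assume h: "restriction_category Y \<and> rfunctor X Y Fo Fa"
    show "\<forall>c\<in>cArr (R (L X)). phi_arr (R_arr (L Y) (L_obj Fo Fa) (L_arr Fo Fa) c) = Fa (phi_arr c)"
      using mp[OF n h] .
  qed
qed

end
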